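(* For every integer $n\geqslant3$, the generalized quaternion group $Q_{2^n}=\langle x,y\mid x^{2^{n-1}}=1,\ y^2=x^{2^{n-2}},\ x^y=x^{-1}\rangle$ has a $2$-power-free decomposition.
   Context: The power graph $\mathcal{P}(G)$ of a finite group $G$ has vertex set $G$, two distinct elements being adjacent when one is a power of the other. An $n$-power-free decomposition of $G$ ($n\geqslant1$) is a partition $G=C\uplus B_1\uplus\cdots\uplus B_n$ of $G$ into a cyclic $p$-subgroup $C$ of maximal order (for some prime $p$) and $n$ nonempty subsets $B_1,\ldots,B_n$ such that each $B_i$ is an independent set (pairwise nonadjacent vertices) of $\mathcal{P}(G)$ and $|B_i|>1$ for each $i$. *)

theory Defs
  imports "HOL-Algebra.Algebra"
begin

definition power_adj :: "('a, 'b) monoid_scheme \<Rightarrow> 'a \<Rightarrow> 'a \<Rightarrow> bool" where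
  "power_adj G a b \<longleftrightarrow> a \<noteq> b \<and> ((\<exists>k::nat. a = b [^]\<^bsub>G\<^esub> k) \<or> (\<exists>k::nat. b = a [^]\<^bsub>G\<^esub> k))"

definition power_independent :: "('a, 'b) monoid_scheme \<Rightarrow> 'a set \<Rightarrow> bool" where
  "power_independent G B \<longleftrightarrow> B \<subseteq> carrier G \<and> (\<forall>a\<in>B. \<forall>b\<in>B. \<not> power_adj G a b)"

definition cyclic_subgroup :: "('a, 'b) monoid_scheme \<Rightarrow> 'a set \<Rightarrow> bool" where
  "cyclic_subgroup G C \<longleftrightarrow> subgroup C G \<and> (\<exists>g\<in>C. C = generate G {g})"

definition cyclic_p_subgroup :: "('a, 'b) monoid_scheme \<Rightarrow> nat \<Rightarrow> 'a set \<Rightarrow> bool" where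
  "cyclic_p_subgroup G p C \<longleftrightarrow> Factorial_Ring.prime p \<and> cyclic_subgroup G C \<and> finite C \<and> (\<exists>k::nat. card C = p ^ k)"

definition max_cyclic_p_subgroup :: "('a, 'b) monoid_scheme \<Rightarrow> nat \<Rightarrow> 'a set \<Rightarrow> bool" where
  "max_cyclic_p_subgroup G p C \<longleftrightarrow> cyclic_p_subgroup G p C \<and>
     (\<forall>D. cyclic_p_subgroup G p D \<longrightarrow> card D \<le> card C)"

definition power_free_decomposition ::
    "('a, 'b) monoid_scheme \<Rightarrow> nat \<Rightarrow> 'a set \<Rightarrow> (nat \<Rightarrow> 'a set) \<Rightarrow> bool" where
  "power_free_decomposition G n C B \<longleftrightarrow>
     n \<ge> 1 \<and>
     (\<exists>p. max_cyclic_p_subgroup G p C) \<and>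
     carrier G = C \<union> (\<Union>i\<in>{1..n}. B i) \<and>
     (\<forall>i\<in>{1..n}. C \<inter> B i = {}) \<and>
     (\<forall>i\<in>{1..n}. \<forall>j\<in>{1..n}. i \<noteq> j \<longrightarrow> B i \<inter> B j = {}) \<and>
     (\<forall>i\<in>{1..n}. B i \<noteq> {} \<and> power_independent G (B i) \<and> card (B i) > 1)"

definition has_power_free_decomposition :: "('a, 'b) monoid_scheme \<Rightarrow> nat \<Rightarrow> bool" where
  "has_power_free_decomposition G n \<longleftrightarrow> (\<exists>C B. power_free_decomposition G n C B)"

end

theory Submission
  imports Defs
begin

lemma (in group) comm_pow_lemma:
  assumes "a \<in> carrier G" "b \<in> carrier G" "y \<in> carrier G" "a \<otimes> y = y \<otimes> b"
  shows "a [^] (k::nat) \<otimes> y = y \<otimes> b [^] k"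
proof (induction k)
  case 0 then show ?case using assms by simp
next
  case (Suc k)
  have "a [^] Suc k \<otimes> y = a [^] k \<otimes> (a \<otimes> y)" using assms by (simp add: m_assoc)
  also have "... = (a [^] k \<otimes> y) \<otimes> b" using assms by (simp add: m_assoc)
  also have "... = y \<otimes> b [^] Suc k" using assms Suc by (simp add: m_assoc)
  finally show ?case .
qed

lemma (in group) int_pow_mod:
  assumes "a \<in> carrier G" "a [^] (M::int) = \<one>"
  shows "a [^] (k::int) = a [^] (k mod M)"
proof -
  have "a [^] k = a [^] (M * (k div M) + k mod M)" by (metis mult_div_mod_eq)
  also have "... = (a [^] M) [^] (k div M) \<otimes> a [^] (k mod M)"
    by (simp only: int_pow_mult[OF assms(1)] int_pow_pow[OF assms(1)])
  also have "... = a [^] (k mod M)" using assms(1) by (simp only: assms(2) int_pow_one) simp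
  finally show ?thesis .
qed

lemma (in group) main_lemma:
  assumes "n \<ge> 3"
    and "x \<in> carrier G" and "y \<in> carrier G"
    and "generate G {x, y} = carrier G"
    and "x [^] ((2::nat) ^ (n - 1)) = \<one>"
    and "y [^] (2::nat) = x [^] ((2::nat) ^ (n - 2))"
    and "inv y \<otimes> x \<otimes> y = inv x"
    and "finite (carrier G)" and "card (carrier G) = 2 ^ n"
  shows "has_power_free_decomposition G 2"
proof -
  note xc = assms(2) and yc = assms(3)
  define H :: int where "H = 2 ^ (n-2)"
  define N :: int where "N = 2 * H"
  define Xp where "Xp = (\<lambda>i::int. x [^] i)"
  define Yp where "Yp = (\<lambda>i::int. x [^] i \<otimes> y)"
  have Xc[simp]: "Xp i \<in> carrier G" for i unfolding Xp_def using xc by simp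
  have Yc[simp]: "Yp i \<in> carrier G" for i unfolding Yp_def using xc yc by simp
  have H2: "H \<ge> 2"
  proof -
    have "(2::int)^1 \<le> 2^(n-2)" by (rule power_increasing) (use assms(1) in auto)
    then show ?thesis unfolding H_def by simp
  qed
  have n1: "n - 1 = Suc (n-2)" using assms(1) by simp
  have n0: "n = Suc (Suc (n-2))" using assms(1) by simp
  have intN: "int (2^(n-1)) = N" unfolding N_def H_def n1 by simp
  have intH: "int (2^(n-2)) = H" unfolding H_def by simp
  have int2n: "int (2^n) = 2 * N" unfolding N_def H_def by (subst n0) simp
  have XN: "Xp N = \<one>" unfolding Xp_def using assms(5) intN int_pow_int by metis
  have yy: "y \<otimes> y = Xp H"
  proof -
    have "y [^] (2::nat) = y \<otimes> y" using yc by (simp add: numeral_2_eq_2)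
    then show ?thesis using assms(6) intH int_pow_int unfolding Xp_def by metis
  qed
  have F0: "x \<otimes> y = y \<otimes> inv x"
  proof -
    have "y \<otimes> (inv y \<otimes> x \<otimes> y) = x \<otimes> y" using xc yc by (simp add: m_assoc[symmetric])
    then show ?thesis using assms(7) by simp
  qed
  have F1: "inv x \<otimes> y = y \<otimes> x"
  proof -
    have "y \<otimes> x = inv x \<otimes> (x \<otimes> y) \<otimes> x" using xc yc by (simp add: m_assoc[symmetric])
    also have "... = inv x \<otimes> (y \<otimes> inv x) \<otimes> x" using F0 by simp
    also have "... = inv x \<otimes> y" using xc yc by (simp add: m_assoc)
    finally show ?thesis by (rule sym)
  qed
  have F3: "Xp i \<otimes> y = y \<otimes> Xp (-i)" for i
  proof (cases "i \<ge> 0")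
    case True
    define k where "k = nat i"
    have k: "i = int k" using True unfolding k_def by simp
    have "x [^] k \<otimes> y = y \<otimes> (inv x) [^] k" using comm_pow_lemma[OF xc _ yc F0] xc by simp
    then show ?thesis unfolding Xp_def k using xc by (simp add: int_pow_int int_pow_neg_int nat_pow_inv)
  next
    case False
    define k where "k = nat (-i)"
    have k: "i = - int k" using False unfolding k_def by simp
    have "(inv x) [^] k \<otimes> y = y \<otimes> x [^] k" using comm_pow_lemma[OF _ xc yc F1] xc by simp
    then show ?thesis unfolding Xp_def k using xc by (simp add: int_pow_int int_pow_neg_int nat_pow_inv)
  qed
  have P1: "Xp i \<otimes> Xp j = Xp (i + j)" for i j unfolding Xp_def using xc by (simp add: int_pow_mult)
  have P2: "Xp i \<otimes> Yp j = Yp (i + j)" for i j unfolding Xp_def Yp_def using xc yc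
    by (simp add: int_pow_mult m_assoc)
  have P3: "Yp i \<otimes> Xp j = Yp (i - j)" for i j
  proof -
    have "Yp i \<otimes> Xp j = Xp i \<otimes> (y \<otimes> Xp j)" unfolding Yp_def Xp_def using xc yc by (simp add: m_assoc)
    also have "y \<otimes> Xp j = Xp (-j) \<otimes> y" using F3[of "-j"] by simp
    also have "Xp i \<otimes> (Xp (-j) \<otimes> y) = Yp (i - j)" unfolding Yp_def Xp_def using xc yc
      by (simp add: int_pow_mult int_pow_diff int_pow_neg m_assoc[symmetric])
    finally show ?thesis .
  qed
  have P4: "Yp i \<otimes> Yp j = Xp (i - j + H)" for i j
  proof -
    have "Yp i \<otimes> Yp j = (Yp i \<otimes> Xp j) \<otimes> y" unfolding Yp_def Xp_def using xc yc by (simp add: m_assoc)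
    also have "... = Xp (i - j) \<otimes> (y \<otimes> y)" unfolding P3 unfolding Yp_def Xp_def using xc yc by (simp add: m_assoc)
    also have "... = Xp (i - j + H)" using yy P1 by simp
    finally show ?thesis .
  qed
  have Npos: "N > 0" using H2 unfolding N_def by simp
  have X0: "Xp 0 = \<one>" unfolding Xp_def by simp
  have HH: "Xp H \<otimes> Xp H = \<one>"
  proof -
    have "Xp H \<otimes> Xp H = Xp (H + H)" by (rule P1)
    also have "H + H = N" unfolding N_def by simp
    finally show ?thesis using XN by simp
  qed
  have Xmod: "Xp i = Xp (i mod N)" for i
    unfolding Xp_def using int_pow_mod[OF xc] XN unfolding Xp_def by blast
  have Ymod: "Yp i = Yp (i mod N)" for i
    using Xmod[of i] unfolding Xp_def Yp_def by simp
  define S where "S = range Xp \<union> range Yp"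
  have gen: "g \<in> S" if "g \<in> generate G {x, y}" for g
    using that
  proof (induction rule: generate.induct)
    case one
    then show ?case unfolding S_def using X0 by (metis UnI1 rangeI)
  next
    case (incl h)
    have "x = Xp 1" unfolding Xp_def using xc by simp
    moreover have "y = Yp 0" unfolding Yp_def using yc by simp
    ultimately show ?case using incl unfolding S_def by auto
  next
    case (inv h)
    have "inv x = Xp (-1)" unfolding Xp_def using xc by (simp add: int_pow_neg)
    moreover have "inv y = Yp H"
    proof (rule inv_equality)
      have "Yp H \<otimes> y = Xp H \<otimes> (y \<otimes> y)" unfolding Yp_def Xp_def using xc yc by (simp add: m_assoc)
      also have "... = \<one>" unfolding yy by (rule HH)
      finally show "Yp H \<otimes> y = \<one>" .
    qed (use yc in simp_all)
    ultimately show ?case using inv unfolding S_def by auto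
  next
    case (eng h1 h2)
    then show ?case unfolding S_def using P1 P2 P3 P4 by (auto simp del: )
  qed
  have carrS: "carrier G = S"
    using gen assms(4) unfolding S_def by auto
  have rX: "range Xp = Xp ` {0..<N}"
  proof
    show "range Xp \<subseteq> Xp ` {0..<N}"
    proof
      fix g assume "g \<in> range Xp"
      then obtain i where "g = Xp i" by auto
      then have "g = Xp (i mod N)" using Xmod by simp
      moreover have "i mod N \<in> {0..<N}" using Npos by simp
      ultimately show "g \<in> Xp ` {0..<N}" by blast
    qed
  qed auto
  have rY: "range Yp = Yp ` {0..<N}"
  proof
    show "range Yp \<subseteq> Yp ` {0..<N}"
    proof
      fix g assume "g \<in> range Yp"
      then obtain i where "g = Yp i" by auto
      then have "g = Yp (i mod N)" using Ymod by simp
      moreover have "i mod N \<in> {0..<N}" using Npos by simp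
      ultimately show "g \<in> Yp ` {0..<N}" by blast
    qed
  qed auto
  have cardN: "card {0..<N} = nat N" by simp
  have cX: "card (range Xp) \<le> nat N" using rX card_image_le[of "{0..<N}" Xp] by simp
  have cY: "card (range Yp) \<le> nat N" using rY card_image_le[of "{0..<N}" Yp] by simp
  have fX: "finite (range Xp)" using rX by simp
  have fY: "finite (range Yp)" using rY by simp
  have "(2::nat)^n = nat (2*N)" using int2n by (metis nat_int)
  then have cS: "card S = 2 * nat N" using carrS assms(9) by (simp add: nat_mult_distrib)
  have CU: "card (range Xp) + card (range Yp) = card S + card (range Xp \<inter> range Yp)"
    unfolding S_def by (rule card_Un_Int[OF fX fY])
  have cX2: "card (range Xp) = nat N" and cY2: "card (range Yp) = nat N"
    and disj0: "card (range Xp \<inter> range Yp) = 0"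
    using CU cS cX cY by linarith+
  have disj: "range Xp \<inter> range Yp = {}" using disj0 fX by simp
  have injY: "inj_on Yp {0..<N}"
    by (rule eq_card_imp_inj_on) (use cY2 rY in simp_all)
  have YpNH: "Yp (H + j) = Yp (j - H)" for j
  proof -
    have "(H + j) mod N = (j - H) mod N"
    proof -
      have "H + j = (j - H) + N" unfolding N_def by simp
      then show ?thesis by (metis mod_add_self2)
    qed
    then show ?thesis using Ymod by metis
  qed
  have b2: "Yp j [^] (2::int) = Xp H" for j
  proof -
    have "Yp j [^] (2::int) = Yp j [^] (1 + 1 :: int)" by simp
    also have "... = Yp j \<otimes> Yp j" by (simp only: int_pow_mult[OF Yc]) simp
    also have "... = Xp H" using P4 by simp
    finally show ?thesis .
  qed
  have b3: "Yp j [^] (3::int) = Yp (H + j)" for j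
  proof -
    have "Yp j [^] (3::int) = Yp j [^] (2 + 1 :: int)" by simp
    also have "... = Xp H \<otimes> Yp j" by (simp only: int_pow_mult[OF Yc] b2) simp
    also have "... = Yp (H + j)" using P2 by simp
    finally show ?thesis .
  qed
  have b4: "Yp j [^] (4::int) = \<one>" for j
  proof -
    have "Yp j [^] (4::int) = Yp j [^] (3 + 1 :: int)" by simp
    also have "... = Yp (H + j) \<otimes> Yp j" by (simp only: int_pow_mult[OF Yc] b3) simp
    also have "... = Xp (H + j - j + H)" by (rule P4)
    also have "... = \<one>" using HH P1[of H H] by simp
    finally show ?thesis .
  qed
  have pw: "Yp j [^] (k::nat) \<in> {\<one>, Yp j, Xp H, Yp (H + j)}" for j k
  proof -
    let ?b = "Yp j"
    have "?b [^] k = ?b [^] (int k)" by (simp add: int_pow_int)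
    also have "... = ?b [^] (int k mod 4)" using int_pow_mod[OF Yc b4] .
    finally have e: "?b [^] k = ?b [^] (int k mod 4)" .
    have "int k mod 4 = 0 \<or> int k mod 4 = 1 \<or> int k mod 4 = 2 \<or> int k mod 4 = 3" by presburger
    then show ?thesis using e b2 b3 by auto
  qed
  have blk: "Yp i \<noteq> Yp j [^] (k::nat)"
    if ij: "i \<in> {0..<N}" "j \<in> {0..<N}" "(i < H) = (j < H)" "Yp i \<noteq> Yp j" for i j k
  proof
    assume eq: "Yp i = Yp j [^] k"
    then consider "Yp i = \<one>" | "Yp i = Yp j" | "Yp i = Xp H" | "Yp i = Yp (H + j)"
      using pw[of j k] by auto
    then show False
    proof cases
      case 1 then show ?thesis using disj X0 by (metis IntI emptyE rangeI)
    next
      case 2 then show ?thesis using ij by simp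
    next
      case 3 then show ?thesis using disj by (metis IntI emptyE rangeI)
    next
      case 4
      show ?thesis
      proof (cases "j < H")
        case True
        then have "H + j \<in> {0..<N}" using ij unfolding N_def by auto
        then have "i = H + j" using injY ij 4 by (meson inj_onD)
        then show ?thesis using True ij by auto
      next
        case False
        then have "j - H \<in> {0..<N}" using ij unfolding N_def by auto
        moreover have "Yp i = Yp (j - H)" using 4 YpNH by simp
        ultimately have "i = j - H" using injY ij by (meson inj_onD)
        then show ?thesis using False ij H2 by (auto simp: N_def)
      qed
    qed
  qed
  define B where "B = (\<lambda>k::nat. if k = 1 then Yp ` {0..<H} else Yp ` {H..<N})"
  have B1: "B 1 = Yp ` {0..<H}" and B2: "B 2 = Yp ` {H..<N}" unfolding B_def by simp_all
  have i12: "{1..2::nat} = {1, 2}" by auto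
  have blk2: "\<not> power_adj G (Yp i) (Yp j)"
    if ij: "i \<in> {0..<N}" "j \<in> {0..<N}" "(i < H) = (j < H)" for i j
  proof
    assume a: "power_adj G (Yp i) (Yp j)"
    then have ne: "Yp i \<noteq> Yp j" unfolding power_adj_def by simp
    from a obtain k where "Yp i = Yp j [^] (k::nat) \<or> Yp j = Yp i [^] (k::nat)"
      unfolding power_adj_def by blast
    then show False using blk[OF ij ne] blk[of j i, OF ij(2,1) _ ne[symmetric]] ij(3) by auto
  qed
  have indep1: "power_independent G (B 1)"
    unfolding power_independent_def B1
    using blk2 unfolding N_def by (auto simp: image_subset_iff)
  have indep2: "power_independent G (B 2)"
    unfolding power_independent_def B2
    using blk2 unfolding N_def by (auto simp: image_subset_iff)
  have injH1: "inj_on Yp {0..<H}" using injY unfolding N_def by (rule inj_on_subset) auto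
  have injH2: "inj_on Yp {H..<N}" using injY unfolding N_def by (rule inj_on_subset) auto
  have card1: "card (B 1) > 1" unfolding B1 using card_image[OF injH1] H2 by simp
  have card2: "card (B 2) > 1" unfolding B2 using card_image[OF injH2] H2 unfolding N_def by simp
  have B12: "B 1 \<inter> B 2 = {}"
  proof -
    have "Yp ` {0..<H} \<inter> Yp ` {H..<N} = Yp ` ({0..<H} \<inter> {H..<N})"
      by (rule inj_on_image_Int[OF injY, symmetric]) (use H2 in \<open>auto simp: N_def\<close>)
    then show ?thesis unfolding B1 B2 by simp
  qed
  have BU: "B 1 \<union> B 2 = range Yp"
  proof -
    have "{0..<N} = {0..<H} \<union> {H..<N}" using H2 unfolding N_def by auto
    then show ?thesis unfolding B1 B2 rY by (simp add: image_Un)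
  qed
  have Cgen: "range Xp = generate G {x}"
    unfolding generate_pow[OF xc] Xp_def by auto
  have cardC: "card (range Xp) = 2 ^ (n - 1)" using cX2 intN by simp
  have Ccyc: "cyclic_p_subgroup G 2 (range Xp)"
    unfolding cyclic_p_subgroup_def cyclic_subgroup_def
  proof (intro conjI)
    show "subgroup (range Xp) G" unfolding Cgen using xc by (intro generate_is_subgroup) simp
    show "\<exists>g\<in>range Xp. range Xp = generate G {g}" using Cgen xc generate.incl[of x "{x}" G] by auto
  qed (use fX cardC in auto)
  have Cmax: "card D \<le> card (range Xp)" if D: "cyclic_p_subgroup G 2 D" for D
  proof -
    from D obtain g where gD: "g \<in> D" and Dg: "D = generate G {g}" and sD: "subgroup D G"
      unfolding cyclic_p_subgroup_def cyclic_subgroup_def by auto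
    have gc: "g \<in> carrier G" using gD sD subgroup.subset by blast
    have Dp: "D = {g [^] (k::int) | k. k \<in> UNIV}" using Dg generate_pow[OF gc] by simp
    then have gS: "g \<in> S" using gc carrS by simp
    then consider i where "g = Xp i" | j where "g = Yp j" unfolding S_def by auto
    then show ?thesis
    proof cases
      case 1
      have "D \<subseteq> range Xp"
      proof
        fix d assume "d \<in> D"
        then obtain k where "d = g [^] (k::int)" using Dp by auto
        then have "d = Xp (i * k)" using 1 unfolding Xp_def using xc by (simp add: int_pow_pow)
        then show "d \<in> range Xp" by simp
      qed
      then show ?thesis using fX by (rule card_mono[rotated])
    next
      case 2
      have "D \<subseteq> (\<lambda>k::nat. g [^] k) ` {0..<4}"
      proof
        fix d assume "d \<in> D"
        then obtain k where k: "d = g [^] (k::int)" using Dp by auto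
        have "g [^] k = g [^] (k mod 4)"
        proof (rule int_pow_mod[OF gc])
          show "g [^] (4::int) = \<one>" using b4 2 by simp
        qed
        also have "... = g [^] (nat (k mod 4))" by (simp add: pow_nat)
        finally have "d = g [^] (nat (k mod 4))" using k by simp
        moreover have "nat (k mod 4) \<in> {0..<4}" by simp
        ultimately show "d \<in> (\<lambda>k::nat. g [^] k) ` {0..<4}" by blast
      qed
      then have "card D \<le> card ((\<lambda>k::nat. g [^] k) ` {0..<4})" by (rule card_mono[rotated]) simp
      also have "... \<le> 4" using card_image_le[of "{0..<4::nat}" "\<lambda>k::nat. g [^] k"] by simp
      also have "4 \<le> card (range Xp)" using cX2 H2 unfolding N_def by simp
      finally show ?thesis .
    qed
  qed
  show ?thesis
    unfolding has_power_free_decomposition_def power_free_decomposition_def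
  proof (intro exI conjI)
    show "max_cyclic_p_subgroup G 2 (range Xp)"
      unfolding max_cyclic_p_subgroup_def using Ccyc Cmax by blast
    show "carrier G = range Xp \<union> (\<Union>i\<in>{1..2}. B i)"
      unfolding i12 carrS S_def using BU by auto
    show "\<forall>i\<in>{1..2}. range Xp \<inter> B i = {}"
      unfolding i12 using BU disj by auto
    show "\<forall>i\<in>{1..2}. \<forall>j\<in>{1..2}. i \<noteq> j \<longrightarrow> B i \<inter> B j = {}"
      unfolding i12 using B12 by auto
    show "\<forall>i\<in>{1..2}. B i \<noteq> {} \<and> power_independent G (B i) \<and> 1 < card (B i)"
      unfolding i12 using indep1 indep2 card1 card2 by auto
  qed simp
qed

theorem proposition3p6:
  fixes G :: "('a, 'b) monoid_scheme" and n :: nat and x y :: 'a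
  assumes "group G"
    and "n \<ge> 3"
    and "x \<in> carrier G" and "y \<in> carrier G"
    and "generate G {x, y} = carrier G"
    and "x [^]\<^bsub>G\<^esub> ((2::nat) ^ (n - 1)) = \<one>\<^bsub>G\<^esub>"
    and "y [^]\<^bsub>G\<^esub> (2::nat) = x [^]\<^bsub>G\<^esub> ((2::nat) ^ (n - 2))"
    and "inv\<^bsub>G\<^esub> y \<otimes>\<^bsub>G\<^esub> x \<otimes>\<^bsub>G\<^esub> y = inv\<^bsub>G\<^esub> x"
    and "finite (carrier G)" and "card (carrier G) = 2 ^ n"
  shows "has_power_free_decomposition G 2"
  using group.main_lemma[OF assms(1)] assms(2-) by blast

end
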